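(* Let the observer be at $(1,0,0)$ and let $r=1$. For $\ell\ge 1$ let $R_\ell$ be the rectangle in the plane $x=0$ with vertices $(0,y_i,z_j)$, $i,j\in\{1,2\}$, where $$y_{1,2}=\frac{r}{\sqrt2}\mp\frac{\ell}{2},\qquad z_{1,2}=\frac{r}{\sqrt2}\mp\frac{1}{2\ell},$$ i.e. the rectangle of area $1$, sides $\ell$ (parallel to the $y$-axis) and $1/\ell$ (parallel to the $z$-axis), centered at $(0,r/\sqrt2,r/\sqrt2)$. Let $\Omega(\ell)$ be the solid angle subtended by $R_\ell$ at the observer. Then the maximum of $\Omega(\ell)$ over $\ell\ge1$ is attained at $\ell=1$ (the square).
   Context: The solid angle subtended at a point $P$ by a planar region $S$ is the area of the radial projection of $S$ onto the unit sphere centered at $P$. For an observer at $(x_0,0,0)$ with $x_0>0$ and the rectangle above, it equals $F(y_2,z_2)-F(y_1,z_2)-F(y_2,z_1)+F(y_1,z_1)$ where $F(y,z)=\arctan\!\big(yz/(x_0\sqrt{x_0^2+y^2+z^2})\big)$. *)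

theory Defs
  imports "HOL-Analysis.Analysis"
begin

text \<open>Antiderivative from the context: observer at (x0,0,0), x0 > 0.\<close>
definition sa_F :: "real \<Rightarrow> real \<Rightarrow> real \<Rightarrow> real" where
  "sa_F x0 y z = arctan (y * z / (x0 * sqrt (x0\<^sup>2 + y\<^sup>2 + z\<^sup>2)))"

text \<open>Solid angle subtended at (x0,0,0) by the rectangle
  {0} x [y1,y2] x [z1,z2] in the plane x = 0 (formula given in the context).\<close>
definition solid_angle_rect :: "real \<Rightarrow> real \<Rightarrow> real \<Rightarrow> real \<Rightarrow> real \<Rightarrow> real" where
  "solid_angle_rect x0 y1 y2 z1 z2 =
     sa_F x0 y2 z2 - sa_F x0 y1 z2 - sa_F x0 y2 z1 + sa_F x0 y1 z1"

definition Omega :: "real \<Rightarrow> real" where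
  "Omega l = (let r = (1::real) in
     solid_angle_rect 1 (r / sqrt 2 - l / 2) (r / sqrt 2 + l / 2)
                        (r / sqrt 2 - 1 / (2 * l)) (r / sqrt 2 + 1 / (2 * l)))"

end

theory Submission
  imports Defs
begin

fun pev :: "int list \<Rightarrow> real \<Rightarrow> real" where
  "pev [] x = 0" | "pev (a # p) x = of_int a + x * pev p x"
fun padd :: "int list \<Rightarrow> int list \<Rightarrow> int list" where
  "padd [] q = q" | "padd p [] = p" | "padd (a # p) (b # q) = (a + b) # padd p q"
definition psc :: "int \<Rightarrow> int list \<Rightarrow> int list" where "psc c p = map (\<lambda>a. c * a) p"
fun pmul :: "int list \<Rightarrow> int list \<Rightarrow> int list" where
  "pmul [] q = []" | "pmul (a # p) q = padd (psc a q) (0 # pmul p q)"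
fun pcomp :: "int list \<Rightarrow> int list \<Rightarrow> int list" where
  "pcomp [] q = []" | "pcomp (a # p) q = padd [a] (pmul q (pcomp p q))"
fun pdil :: "int \<Rightarrow> int list \<Rightarrow> int list" where
  "pdil m [] = []" | "pdil m (a # p) = (a * m ^ length p) # pdil m p"
fun pos_list :: "int list \<Rightarrow> bool" where
  "pos_list [] = False" | "pos_list (a # p) = (0 < a \<and> list_all (\<lambda>b. 0 \<le> b) p)"

lemma pev_padd: "pev (padd p q) x = pev p x + pev q x"
  by (induction p q rule: padd.induct) (simp_all add: algebra_simps)
lemma pev_psc: "pev (psc c p) x = of_int c * pev p x"
  unfolding psc_def by (induction p) (simp_all add: algebra_simps)
lemma pev_pmul: "pev (pmul p q) x = pev p x * pev q x"
  by (induction p) (simp_all add: pev_padd pev_psc algebra_simps)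
lemma pev_pcomp: "pev (pcomp p q) x = pev p (pev q x)"
  by (induction p) (simp_all add: pev_padd pev_pmul algebra_simps)
lemma pev_pdil: "(m::int) \<noteq> 0 \<Longrightarrow> pev (pdil m p) u * of_int m = of_int m ^ length p * pev p (u / of_int m)"
proof (induction p)
  case Nil then show ?case by simp
next
  case (Cons a p)
  have "pev (pdil m (a # p)) u * of_int m = of_int a * of_int m ^ length p * of_int m + u * (pev (pdil m p) u * of_int m)"
    by (simp add: algebra_simps)
  also have "\<dots> = of_int m ^ length (a # p) * pev (a # p) (u / of_int m)"
    using Cons by (simp add: field_simps)
  finally show ?case .
qed
lemma pev_nonneg: "list_all (\<lambda>b. 0 \<le> b) p \<Longrightarrow> 0 \<le> x \<Longrightarrow> 0 \<le> pev p x"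
  by (induction p) auto
lemma pev_pos: assumes "pos_list p" "0 \<le> x" shows "0 < pev p x"
proof (cases p)
  case (Cons a q)
  then have "0 < a" "0 \<le> pev q x" using assms by (auto intro: pev_nonneg)
  then show ?thesis using Cons assms(2) by (simp add: add_pos_nonneg)
qed (use assms in auto)
lemma shift_pos:
  assumes "pos_list (pcomp (pdil m p) [n, 1])" "0 < m" "of_int n / of_int m \<le> T"
  shows "0 < pev p T"
proof -
  define y where "y = of_int m * T - of_int n"
  have m: "(of_int m::real) > 0" using assms(2) by simp
  have y: "y \<ge> 0" using assms(3) m unfolding y_def by (simp add: field_simps)
  have "0 < pev (pcomp (pdil m p) [n, 1]) y" using pev_pos[OF assms(1) y] .
  also have "pev (pcomp (pdil m p) [n, 1]) y = pev (pdil m p) (of_int n + y)"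
    by (simp add: pev_pcomp)
  finally have "0 < pev (pdil m p) (of_int n + y) * of_int m" using m by simp
  also have "\<dots> = of_int m ^ length p * pev p T"
    using pev_pdil[of m p] assms(2) m unfolding y_def by simp
  finally show ?thesis using m by (simp add: zero_less_mult_iff)
qed


lemma pos7: "pos_list (pcomp (pdil 10 L) [7, 1]) \<Longrightarrow> 7/10 \<le> T \<Longrightarrow> 0 < pev L T"
  by (rule shift_pos[where m=10 and n=7]) simp_all
lemma pos28: "pos_list (pcomp (pdil 10 L) [28, 1]) \<Longrightarrow> 28/10 \<le> T \<Longrightarrow> 0 < pev L T"
  by (rule shift_pos[where m=10 and n=28]) simp_all
lemma pos46: "pos_list (pcomp (pdil 10 L) [46, 1]) \<Longrightarrow> 46/10 \<le> T \<Longrightarrow> 0 < pev L T"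
  by (rule shift_pos[where m=10 and n=46]) simp_all
lemma pev_zero: "list_all (\<lambda>a. a = 0) L \<Longrightarrow> pev L x = 0"
  by (induction L) auto

definition Lq1 :: "int list" where "Lq1 = [-1, 6, -2]"
definition fq1 :: "real \<Rightarrow> real" where "fq1 T = pev Lq1 T"
definition Lq2 :: "int list" where "Lq2 = [-1, -6, -2]"
definition fq2 :: "real \<Rightarrow> real" where "fq2 T = pev Lq2 T"
definition Lk3 :: "int list" where "Lk3 = [1, -18, -2]"
definition fk3 :: "real \<Rightarrow> real" where "fk3 T = pev Lk3 T"
definition Lk4 :: "int list" where "Lk4 = [1, 18, -2]"
definition fk4 :: "real \<Rightarrow> real" where "fk4 T = pev Lk4 T"
definition Lhh :: "int list" where "Lhh = [1, 0, 2]"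
definition fhh :: "real \<Rightarrow> real" where "fhh T = pev Lhh T"
definition Lkk :: "int list" where "Lkk = [-1, 0, 2]"
definition fkk :: "real \<Rightarrow> real" where "fkk T = pev Lkk T"
definition La1 :: "int list" where "La1 = [3, 2, 1]"
definition fa1 :: "real \<Rightarrow> real" where "fa1 T = pev La1 T"
definition La2 :: "int list" where "La2 = [3, -2, 1]"
definition fa2 :: "real \<Rightarrow> real" where "fa2 T = pev La2 T"
definition Lb1 :: "int list" where "Lb1 = [1, 4, 12]"
definition fb1 :: "real \<Rightarrow> real" where "fb1 T = pev Lb1 T"
definition Lb2 :: "int list" where "Lb2 = [1, -4, 12]"
definition fb2 :: "real \<Rightarrow> real" where "fb2 T = pev Lb2 T"
definition LP1 :: "int list" where "LP1 = [1, 4, 16, 8, 4]"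
definition fP1 :: "real \<Rightarrow> real" where "fP1 T = pev LP1 T"
definition LP2 :: "int list" where "LP2 = [1, -4, 16, -8, 4]"
definition fP2 :: "real \<Rightarrow> real" where "fP2 T = pev LP2 T"
definition LP3 :: "int list" where "LP3 = [1, -4, 16, 8, 4]"
definition fP3 :: "real \<Rightarrow> real" where "fP3 T = pev LP3 T"
definition LP4 :: "int list" where "LP4 = [1, 4, 16, -8, 4]"
definition fP4 :: "real \<Rightarrow> real" where "fP4 T = pev LP4 T"
definition LN3 :: "int list" where "LN3 = [0, -456, 0, 19336, 0, 1258336, 0, 7382976, 0, 5033344, 0, 309376, 0, -29184]"
definition fN3 :: "real \<Rightarrow> real" where "fN3 T = pev LN3 T"
definition LC1 :: "int list" where "LC1 = [25, 49, 40]"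
definition fC1 :: "real \<Rightarrow> real" where "fC1 T = pev LC1 T"
definition LC2 :: "int list" where "LC2 = [41, -24, 40]"
definition fC2 :: "real \<Rightarrow> real" where "fC2 T = pev LC2 T"
definition LC3 :: "int list" where "LC3 = [8, 51, 40]"
definition fC3 :: "real \<Rightarrow> real" where "fC3 T = pev LC3 T"
definition LC4 :: "int list" where "LC4 = [65, -27, 40]"
definition fC4 :: "real \<Rightarrow> real" where "fC4 T = pev LC4 T"
lemmas fdefs = fq1_def fq2_def fk3_def fk4_def fhh_def fkk_def fa1_def fa2_def fb1_def fb2_def fP1_def fP2_def fP3_def fP4_def fN3_def fC1_def fC2_def fC3_def fC4_def
lemma FA_pos: assumes "7/10 \<le> T" shows "0 < ((-1) * ((((((((((fq1 T) * ((400 * (fP1 T)) + ((fC1 T) * (fC1 T)))) * (fa2 T)) * (fb2 T)) * ((400 * (fP2 T)) + ((fC2 T) * (fC2 T)))) * (fP3 T)) * (fP4 T)) * ((((((fk4 T) * (fa1 T)) * (fb2 T)) * (fC4 T)) * ((400 * (fP3 T)) + ((fC3 T) * (fC3 T)))) + ((-1) * (((((fk3 T) * (fa2 T)) * (fb1 T)) * (fC3 T)) * ((400 * (fP4 T)) + ((fC4 T) * (fC4 T))))))) + (1600 * (((((((((fq2 T) * (fC1 T)) * (fC2 T)) * (fa1 T)) * (fb1 T)) * (fP1 T)) * (fP3 T)) * (fP4 T)) * ((((((fk4 T) * (fa1 T)) * (fb2 T)) * (fC4 T)) * ((400 * (fP3 T)) + ((fC3 T) * (fC3 T)))) + ((-1)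 * (((((fk3 T) * (fa2 T)) * (fb1 T)) * (fC3 T)) * ((400 * (fP4 T)) + ((fC4 T) * (fC4 T))))))))) + (((((((fhh T) * (fN3 T)) * ((400 * (fP3 T)) + ((fC3 T) * (fC3 T)))) * ((400 * (fP4 T)) + ((fC4 T) * (fC4 T)))) * (fC1 T)) * (fP1 T)) * ((400 * (fP2 T)) + ((fC2 T) * (fC2 T))))))"
proof -
  have c: "pos_list (pcomp (pdil 10 (psc (-1) (padd (padd (pmul (pmul (pmul (pmul (pmul (pmul (pmul Lq1 (padd (psc (400) LP1) (pmul LC1 LC1))) La2) Lb2) (padd (psc (400) LP2) (pmul LC2 LC2))) LP3) LP4) (padd (pmul (pmul (pmul (pmul Lk4 La1) Lb2) LC4) (padd (psc (400) LP3) (pmul LC3 LC3))) (psc (-1) (pmul (pmul (pmul (pmul Lk3 La2) Lb1) LC3) (padd (psc (400) LP4) (pmul LC4 LC4)))))) (psc (1600) (pmul (pmul (pmul (pmul (pmul (pmul (pmul (pmul Lq2 LC1) LC2) La1) Lb1) LP1) LP3) LP4) (padd (pmul (pmul (pmul (pmul Lk4 La1) Lb2) LC4) (padd (psc (400) LP3) (pmul LC3 LC3))) (psc (-1) (pmul (pmul (pmul (pmul Lk3 La2) Lb1) LC3) (padd (psc (400) LP4) (pmul LC4 LC4)))))))) (pmul (pmul (pmul (pmul (pmul (pmul Lhh LN3) (padd (psc (400) LP3) (pmul LC3 LC3))) (padd (psc (400) LP4) (pmul LC4 LC4))) LC1) LP1) (padd (psc (400) LP2) (pmul LC2 LC2))))))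 [7, 1])" by code_simp
  have "0 < pev (psc (-1) (padd (padd (pmul (pmul (pmul (pmul (pmul (pmul (pmul Lq1 (padd (psc (400) LP1) (pmul LC1 LC1))) La2) Lb2) (padd (psc (400) LP2) (pmul LC2 LC2))) LP3) LP4) (padd (pmul (pmul (pmul (pmul Lk4 La1) Lb2) LC4) (padd (psc (400) LP3) (pmul LC3 LC3))) (psc (-1) (pmul (pmul (pmul (pmul Lk3 La2) Lb1) LC3) (padd (psc (400) LP4) (pmul LC4 LC4)))))) (psc (1600) (pmul (pmul (pmul (pmul (pmul (pmul (pmul (pmul Lq2 LC1) LC2) La1) Lb1) LP1) LP3) LP4) (padd (pmul (pmul (pmul (pmul Lk4 La1) Lb2) LC4) (padd (psc (400) LP3) (pmul LC3 LC3))) (psc (-1) (pmul (pmul (pmul (pmul Lk3 La2) Lb1) LC3) (padd (psc (400) LP4) (pmul LC4 LC4)))))))) (pmul (pmul (pmul (pmul (pmul (pmul Lhh LN3) (padd (psc (400) LP3) (pmul LC3 LC3))) (padd (psc (400) LP4) (pmul LC4 LC4))) LC1) LP1) (padd (psc (400) LP2) (pmul LC2 LC2))))) T" by (rule pos7[OF c assms])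
  moreover have "pev (psc (-1) (padd (padd (pmul (pmul (pmul (pmul (pmul (pmul (pmul Lq1 (padd (psc (400) LP1) (pmul LC1 LC1))) La2) Lb2) (padd (psc (400) LP2) (pmul LC2 LC2))) LP3) LP4) (padd (pmul (pmul (pmul (pmul Lk4 La1) Lb2) LC4) (padd (psc (400) LP3) (pmul LC3 LC3))) (psc (-1) (pmul (pmul (pmul (pmul Lk3 La2) Lb1) LC3) (padd (psc (400) LP4) (pmul LC4 LC4)))))) (psc (1600) (pmul (pmul (pmul (pmul (pmul (pmul (pmul (pmul Lq2 LC1) LC2) La1) Lb1) LP1) LP3) LP4) (padd (pmul (pmul (pmul (pmul Lk4 La1) Lb2) LC4) (padd (psc (400) LP3) (pmul LC3 LC3))) (psc (-1) (pmul (pmul (pmul (pmul Lk3 La2) Lb1) LC3) (padd (psc (400) LP4) (pmul LC4 LC4)))))))) (pmul (pmul (pmul (pmul (pmul (pmul Lhh LN3) (padd (psc (400) LP3) (pmul LC3 LC3))) (padd (psc (400) LP4) (pmul LC4 LC4))) LC1) LP1) (padd (psc (400) LP2) (pmul LC2 LC2))))) T = ((-1) * ((((((((((fq1 T) * ((400 * (fP1 T)) + ((fC1 T) * (fC1 T)))) * (fa2 T)) * (fb2 T)) * ((400 * (fP2 T)) + ((fC2 T) * (fC2 T)))) * (fP3 T)) * (fP4 T)) * ((((((fk4 T) * (fa1 T)) * (fb2 T)) * (fC4 T)) * ((400 * (fP3 T)) + ((fC3 T) * (fC3 T)))) + ((-1) * (((((fk3 T) * (fa2 T)) * (fb1 T))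 * (fC3 T)) * ((400 * (fP4 T)) + ((fC4 T) * (fC4 T))))))) + (1600 * (((((((((fq2 T) * (fC1 T)) * (fC2 T)) * (fa1 T)) * (fb1 T)) * (fP1 T)) * (fP3 T)) * (fP4 T)) * ((((((fk4 T) * (fa1 T)) * (fb2 T)) * (fC4 T)) * ((400 * (fP3 T)) + ((fC3 T) * (fC3 T)))) + ((-1) * (((((fk3 T) * (fa2 T)) * (fb1 T)) * (fC3 T)) * ((400 * (fP4 T)) + ((fC4 T) * (fC4 T))))))))) + (((((((fhh T) * (fN3 T)) * ((400 * (fP3 T)) + ((fC3 T) * (fC3 T)))) * ((400 * (fP4 T)) + ((fC4 T) * (fC4 T)))) * (fC1 T)) * (fP1 T)) * ((400 * (fP2 T)) + ((fC2 T) * (fC2 T))))))"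
    by (simp only: pev_padd pev_pmul pev_psc fdefs of_int_numeral of_int_minus of_int_1)
  ultimately show ?thesis by simp
qed

lemma FB_pos: assumes "28/10 \<le> T" shows "0 < ((-1) * ((1600 * (((((((fq2 T) * (fC2 T)) * (fa1 T)) * (fb1 T)) * (fP3 T)) * (fP4 T)) * ((((((fk4 T) * (fa1 T)) * (fb2 T)) * (fC4 T)) * ((400 * (fP3 T)) + ((fC3 T) * (fC3 T)))) + ((-1) * (((((fk3 T) * (fa2 T)) * (fb1 T)) * (fC3 T)) * ((400 * (fP4 T)) + ((fC4 T) * (fC4 T)))))))) + (((((fhh T) * (fN3 T)) * ((400 * (fP3 T)) + ((fC3 T) * (fC3 T)))) * ((400 * (fP4 T)) + ((fC4 T) * (fC4 T)))) * ((400 * (fP2 T)) + ((fC2 T) * (fC2 T))))))"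
proof -
  have c: "pos_list (pcomp (pdil 10 (psc (-1) (padd (psc (1600) (pmul (pmul (pmul (pmul (pmul (pmul Lq2 LC2) La1) Lb1) LP3) LP4) (padd (pmul (pmul (pmul (pmul Lk4 La1) Lb2) LC4) (padd (psc (400) LP3) (pmul LC3 LC3))) (psc (-1) (pmul (pmul (pmul (pmul Lk3 La2) Lb1) LC3) (padd (psc (400) LP4) (pmul LC4 LC4))))))) (pmul (pmul (pmul (pmul Lhh LN3) (padd (psc (400) LP3) (pmul LC3 LC3))) (padd (psc (400) LP4) (pmul LC4 LC4))) (padd (psc (400) LP2) (pmul LC2 LC2)))))) [28, 1])" by code_simp
  have "0 < pev (psc (-1) (padd (psc (1600) (pmul (pmul (pmul (pmul (pmul (pmul Lq2 LC2) La1) Lb1) LP3) LP4) (padd (pmul (pmul (pmul (pmul Lk4 La1) Lb2) LC4) (padd (psc (400) LP3) (pmul LC3 LC3))) (psc (-1) (pmul (pmul (pmul (pmul Lk3 La2) Lb1) LC3) (padd (psc (400) LP4) (pmul LC4 LC4))))))) (pmul (pmul (pmul (pmul Lhh LN3) (padd (psc (400) LP3) (pmul LC3 LC3))) (padd (psc (400) LP4) (pmul LC4 LC4))) (padd (psc (400) LP2) (pmul LC2 LC2))))) T" by (rule pos28[OF c assms])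
  moreover have "pev (psc (-1) (padd (psc (1600) (pmul (pmul (pmul (pmul (pmul (pmul Lq2 LC2) La1) Lb1) LP3) LP4) (padd (pmul (pmul (pmul (pmul Lk4 La1) Lb2) LC4) (padd (psc (400) LP3) (pmul LC3 LC3))) (psc (-1) (pmul (pmul (pmul (pmul Lk3 La2) Lb1) LC3) (padd (psc (400) LP4) (pmul LC4 LC4))))))) (pmul (pmul (pmul (pmul Lhh LN3) (padd (psc (400) LP3) (pmul LC3 LC3))) (padd (psc (400) LP4) (pmul LC4 LC4))) (padd (psc (400) LP2) (pmul LC2 LC2))))) T = ((-1) * ((1600 * (((((((fq2 T) * (fC2 T)) * (fa1 T)) * (fb1 T)) * (fP3 T)) * (fP4 T)) * ((((((fk4 T) * (fa1 T)) * (fb2 T)) * (fC4 T)) * ((400 * (fP3 T)) + ((fC3 T) * (fC3 T)))) + ((-1) * (((((fk3 T) * (fa2 T)) * (fb1 T)) * (fC3 T)) * ((400 * (fP4 T)) + ((fC4 T) * (fC4 T)))))))) + (((((fhh T) * (fN3 T)) * ((400 * (fP3 T)) + ((fC3 T) * (fC3 T)))) * ((400 * (fP4 T)) + ((fC4 T) * (fC4 T)))) * ((400 * (fP2 T)) + ((fC2 T) * (fC2 T))))))"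
    by (simp only: pev_padd pev_pmul pev_psc fdefs of_int_numeral of_int_minus of_int_1)
  ultimately show ?thesis by simp
qed

lemma SQ_pos: assumes "7/10 \<le> T" shows "0 < ((((((fq2 T) * (fq2 T)) * ((fa1 T) * (fa1 T))) * ((fb1 T) * (fb1 T))) * (fP1 T)) + ((-1) * (((((fq1 T) * (fq1 T)) * ((fa2 T) * (fa2 T))) * ((fb2 T) * (fb2 T))) * (fP2 T))))"
proof -
  have c: "pos_list (pcomp (pdil 10 (padd (pmul (pmul (pmul (pmul Lq2 Lq2) (pmul La1 La1)) (pmul Lb1 Lb1)) LP1) (psc (-1) (pmul (pmul (pmul (pmul Lq1 Lq1) (pmul La2 La2)) (pmul Lb2 Lb2)) LP2)))) [7, 1])" by code_simp
  have "0 < pev (padd (pmul (pmul (pmul (pmul Lq2 Lq2) (pmul La1 La1)) (pmul Lb1 Lb1)) LP1) (psc (-1) (pmul (pmul (pmul (pmul Lq1 Lq1) (pmul La2 La2)) (pmul Lb2 Lb2)) LP2))) T" by (rule pos7[OF c assms])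
  moreover have "pev (padd (pmul (pmul (pmul (pmul Lq2 Lq2) (pmul La1 La1)) (pmul Lb1 Lb1)) LP1) (psc (-1) (pmul (pmul (pmul (pmul Lq1 Lq1) (pmul La2 La2)) (pmul Lb2 Lb2)) LP2))) T = ((((((fq2 T) * (fq2 T)) * ((fa1 T) * (fa1 T))) * ((fb1 T) * (fb1 T))) * (fP1 T)) + ((-1) * (((((fq1 T) * (fq1 T)) * ((fa2 T) * (fa2 T))) * ((fb2 T) * (fb2 T))) * (fP2 T))))"
    by (simp only: pev_padd pev_pmul pev_psc fdefs of_int_numeral of_int_minus of_int_1)
  ultimately show ?thesis by simp
qed

lemma NN3_pos: assumes "46/10 \<le> T" shows "0 < ((-1) * (fN3 T))"
proof -
  have c: "pos_list (pcomp (pdil 10 (psc (-1) LN3)) [46, 1])" by code_simp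
  have "0 < pev (psc (-1) LN3) T" by (rule pos46[OF c assms])
  moreover have "pev (psc (-1) LN3) T = ((-1) * (fN3 T))"
    by (simp only: pev_padd pev_pmul pev_psc fdefs of_int_numeral of_int_minus of_int_1)
  ultimately show ?thesis by simp
qed

lemma q2_sgn: assumes "7/10 \<le> T" shows "0 < ((-1) * (fq2 T))"
proof -
  have c: "pos_list (pcomp (pdil 10 (psc (-1) Lq2)) [7, 1])" by code_simp
  have "0 < pev (psc (-1) Lq2) T" by (rule pos7[OF c assms])
  moreover have "pev (psc (-1) Lq2) T = ((-1) * (fq2 T))"
    by (simp only: pev_padd pev_pmul pev_psc fdefs of_int_numeral of_int_minus of_int_1)
  ultimately show ?thesis by simp
qed

lemma k3_sgn: assumes "7/10 \<le> T" shows "0 < ((-1) * (fk3 T))"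
proof -
  have c: "pos_list (pcomp (pdil 10 (psc (-1) Lk3)) [7, 1])" by code_simp
  have "0 < pev (psc (-1) Lk3) T" by (rule pos7[OF c assms])
  moreover have "pev (psc (-1) Lk3) T = ((-1) * (fk3 T))"
    by (simp only: pev_padd pev_pmul pev_psc fdefs of_int_numeral of_int_minus of_int_1)
  ultimately show ?thesis by simp
qed

lemma hh_sgn: assumes "7/10 \<le> T" shows "0 < (fhh T)"
proof -
  have c: "pos_list (pcomp (pdil 10 Lhh) [7, 1])" by code_simp
  have "0 < pev Lhh T" by (rule pos7[OF c assms])
  moreover have "pev Lhh T = (fhh T)"
    by (simp only: pev_padd pev_pmul pev_psc fdefs of_int_numeral of_int_minus of_int_1)
  ultimately show ?thesis by simp
qed

lemma a1_sgn: assumes "7/10 \<le> T" shows "0 < (fa1 T)"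
proof -
  have c: "pos_list (pcomp (pdil 10 La1) [7, 1])" by code_simp
  have "0 < pev La1 T" by (rule pos7[OF c assms])
  moreover have "pev La1 T = (fa1 T)"
    by (simp only: pev_padd pev_pmul pev_psc fdefs of_int_numeral of_int_minus of_int_1)
  ultimately show ?thesis by simp
qed

lemma b1_sgn: assumes "7/10 \<le> T" shows "0 < (fb1 T)"
proof -
  have c: "pos_list (pcomp (pdil 10 Lb1) [7, 1])" by code_simp
  have "0 < pev Lb1 T" by (rule pos7[OF c assms])
  moreover have "pev Lb1 T = (fb1 T)"
    by (simp only: pev_padd pev_pmul pev_psc fdefs of_int_numeral of_int_minus of_int_1)
  ultimately show ?thesis by simp
qed

lemma b2_sgn: assumes "7/10 \<le> T" shows "0 < (fb2 T)"
proof -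
  have c: "pos_list (pcomp (pdil 10 Lb2) [7, 1])" by code_simp
  have "0 < pev Lb2 T" by (rule pos7[OF c assms])
  moreover have "pev Lb2 T = (fb2 T)"
    by (simp only: pev_padd pev_pmul pev_psc fdefs of_int_numeral of_int_minus of_int_1)
  ultimately show ?thesis by simp
qed

lemma P1_sgn: assumes "7/10 \<le> T" shows "0 < (fP1 T)"
proof -
  have c: "pos_list (pcomp (pdil 10 LP1) [7, 1])" by code_simp
  have "0 < pev LP1 T" by (rule pos7[OF c assms])
  moreover have "pev LP1 T = (fP1 T)"
    by (simp only: pev_padd pev_pmul pev_psc fdefs of_int_numeral of_int_minus of_int_1)
  ultimately show ?thesis by simp
qed

lemma P2_sgn: assumes "7/10 \<le> T" shows "0 < (fP2 T)"
proof -
  have c: "pos_list (pcomp (pdil 10 LP2) [7, 1])" by code_simp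
  have "0 < pev LP2 T" by (rule pos7[OF c assms])
  moreover have "pev LP2 T = (fP2 T)"
    by (simp only: pev_padd pev_pmul pev_psc fdefs of_int_numeral of_int_minus of_int_1)
  ultimately show ?thesis by simp
qed

lemma P3_sgn: assumes "7/10 \<le> T" shows "0 < (fP3 T)"
proof -
  have c: "pos_list (pcomp (pdil 10 LP3) [7, 1])" by code_simp
  have "0 < pev LP3 T" by (rule pos7[OF c assms])
  moreover have "pev LP3 T = (fP3 T)"
    by (simp only: pev_padd pev_pmul pev_psc fdefs of_int_numeral of_int_minus of_int_1)
  ultimately show ?thesis by simp
qed

lemma P4_sgn: assumes "7/10 \<le> T" shows "0 < (fP4 T)"
proof -
  have c: "pos_list (pcomp (pdil 10 LP4) [7, 1])" by code_simp
  have "0 < pev LP4 T" by (rule pos7[OF c assms])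
  moreover have "pev LP4 T = (fP4 T)"
    by (simp only: pev_padd pev_pmul pev_psc fdefs of_int_numeral of_int_minus of_int_1)
  ultimately show ?thesis by simp
qed

lemma C1_sgn: assumes "7/10 \<le> T" shows "0 < (fC1 T)"
proof -
  have c: "pos_list (pcomp (pdil 10 LC1) [7, 1])" by code_simp
  have "0 < pev LC1 T" by (rule pos7[OF c assms])
  moreover have "pev LC1 T = (fC1 T)"
    by (simp only: pev_padd pev_pmul pev_psc fdefs of_int_numeral of_int_minus of_int_1)
  ultimately show ?thesis by simp
qed

lemma C2_sgn: assumes "7/10 \<le> T" shows "0 < (fC2 T)"
proof -
  have c: "pos_list (pcomp (pdil 10 LC2) [7, 1])" by code_simp
  have "0 < pev LC2 T" by (rule pos7[OF c assms])
  moreover have "pev LC2 T = (fC2 T)"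
    by (simp only: pev_padd pev_pmul pev_psc fdefs of_int_numeral of_int_minus of_int_1)
  ultimately show ?thesis by simp
qed

lemma C3_sgn: assumes "7/10 \<le> T" shows "0 < (fC3 T)"
proof -
  have c: "pos_list (pcomp (pdil 10 LC3) [7, 1])" by code_simp
  have "0 < pev LC3 T" by (rule pos7[OF c assms])
  moreover have "pev LC3 T = (fC3 T)"
    by (simp only: pev_padd pev_pmul pev_psc fdefs of_int_numeral of_int_minus of_int_1)
  ultimately show ?thesis by simp
qed

lemma C4_sgn: assumes "7/10 \<le> T" shows "0 < (fC4 T)"
proof -
  have c: "pos_list (pcomp (pdil 10 LC4) [7, 1])" by code_simp
  have "0 < pev LC4 T" by (rule pos7[OF c assms])
  moreover have "pev LC4 T = (fC4 T)"
    by (simp only: pev_padd pev_pmul pev_psc fdefs of_int_numeral of_int_minus of_int_1)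
  ultimately show ?thesis by simp
qed

lemma ID_eq: "((((((fk4 T) * (fk4 T)) * ((fa1 T) * (fa1 T))) * ((fb2 T) * (fb2 T))) * (fP3 T)) + ((-1) * (((((fk3 T) * (fk3 T)) * ((fa2 T) * (fa2 T))) * ((fb1 T) * (fb1 T))) * (fP4 T)))) = ((fkk T) * (fN3 T))"
proof -
  have c: "list_all (\<lambda>a. a = 0) (padd (padd (pmul (pmul (pmul (pmul Lk4 Lk4) (pmul La1 La1)) (pmul Lb2 Lb2)) LP3) (psc (-1) (pmul (pmul (pmul (pmul Lk3 Lk3) (pmul La2 La2)) (pmul Lb1 Lb1)) LP4))) (psc (-1) (pmul Lkk LN3)))" by code_simp
  have "pev (padd (padd (pmul (pmul (pmul (pmul Lk4 Lk4) (pmul La1 La1)) (pmul Lb2 Lb2)) LP3) (psc (-1) (pmul (pmul (pmul (pmul Lk3 Lk3) (pmul La2 La2)) (pmul Lb1 Lb1)) LP4))) (psc (-1) (pmul Lkk LN3))) T = 0" by (rule pev_zero[OF c])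
  moreover have "pev (padd (padd (pmul (pmul (pmul (pmul Lk4 Lk4) (pmul La1 La1)) (pmul Lb2 Lb2)) LP3) (psc (-1) (pmul (pmul (pmul (pmul Lk3 Lk3) (pmul La2 La2)) (pmul Lb1 Lb1)) LP4))) (psc (-1) (pmul Lkk LN3))) T = ((((((fk4 T) * (fk4 T)) * ((fa1 T) * (fa1 T))) * ((fb2 T) * (fb2 T))) * (fP3 T)) + ((-1) * (((((fk3 T) * (fk3 T)) * ((fa2 T) * (fa2 T))) * ((fb1 T) * (fb1 T))) * (fP4 T)))) + ((-1) * ((fkk T) * (fN3 T)))"
    by (simp only: pev_padd pev_pmul pev_psc fdefs of_int_numeral of_int_minus of_int_1)
  ultimately show ?thesis by simp
qed

lemma sq_sum_nonpos:
  fixes y3 y4 :: real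
  assumes "y3 < 0" "y4^2 \<le> y3^2"
  shows "y3 + y4 \<le> 0"
proof -
  have "\<bar>y4\<bar> \<le> \<bar>y3\<bar>" using assms(2) by (simp add: abs_le_square_iff)
  thus ?thesis using assms(1) by linarith
qed

lemma amgm40:
  fixes s P C :: real
  assumes "s > 0" "s^2 = P"
  shows "40* C* s \<le> 400* P + C* C"
proof -
  have "0 \<le> (20* s - C)^2" by simp
  thus ?thesis using assms by (simp add: power2_eq_square algebra_simps)
qed

lemma frac_cross:
  fixes n1 n2 d1 d2 :: real
  assumes "0 < d1" "0 < d2" "n1 * d2 \<le> n2 * d1"
  shows "n1 / d1 \<le> n2 / d2"
proof -
  have "n1 / d1 = (n1 * d2) / (d1 * d2)" using assms by simp
  also have "\<dots> \<le> (n2 * d1) / (d1 * d2)" by (rule divide_right_mono) (use assms in simp_all)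
  also have "\<dots> = n2 / d2" using assms by simp
  finally show ?thesis .
qed

lemma bound_neg:
  fixes q s P C D :: real
  assumes "q \<le> 0" "s > 0" "s^2 = P" "C > 0" "D > 0"
  shows "q/(D* s) \<le> q*(40* C)/(D*(400* P + C* C))"
proof -
  have h: "40* C* s \<le> 400* P + C* C" using amgm40[OF assms(2,3)] .
  have P0: "P > 0" using assms(2,3) by (metis zero_less_power)
  have p: "400* P + C* C > 0" using P0 by (simp add: add_pos_nonneg)
  have "D*(40* C* s) \<le> D*(400* P + C* C)" using h assms(5) by (simp add: mult_left_mono)
  hence "(40* C)*(D* s) \<le> 1*(D*(400* P + C* C))" by (simp add: mult_ac)
  hence f: "(40* C)/(D*(400* P + C* C)) \<le> 1/(D* s)"
    by (rule frac_cross[rotated 2]) (use p assms in simp_all)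
  have "q * (1/(D* s)) \<le> q * ((40* C)/(D*(400* P + C* C)))" using f assms(1) by (rule mult_left_mono_neg)
  thus ?thesis by simp
qed

lemma bound_pos:
  fixes q s P C D :: real
  assumes "q \<ge> 0" "s > 0" "s^2 = P" "C > 0" "D > 0"
  shows "q/(D* s) \<le> q*(400* P + C* C)/(D*(40* C* P))"
proof -
  have h: "40* C* s \<le> 400* P + C* C" using amgm40[OF assms(2,3)] .
  have P: "P > 0" using assms by (metis zero_less_power)
  have "40* C* P = (40* C* s)* s" using assms(3) by (simp add: power2_eq_square)
  also have "\<dots> \<le> (400* P + C* C)* s" using h assms(2) by (simp add: mult_right_mono)
  finally have "40* C* P \<le> (400* P + C* C)* s" .
  hence "D*(40* C* P) \<le> D*((400* P + C* C)* s)" using assms(5) by (simp add: mult_left_mono)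
  hence "1*(D*(40* C* P)) \<le> (400* P + C* C)*(D* s)" by (simp add: mult_ac)
  hence f: "1/(D* s) \<le> (400* P + C* C)/(D*(40* C* P))"
    by (rule frac_cross[rotated 2]) (use P assms in simp_all)
  have "q * (1/(D* s)) \<le> q * ((400* P + C* C)/(D*(40* C* P)))" using f assms(1) by (rule mult_left_mono)
  thus ?thesis by simp
qed

lemma lower40:
  fixes s P C :: real
  assumes "s > 0" "s^2 = P" "C > 0"
  shows "40* C* P/(400* P + C* C) \<le> s"
proof -
  have h: "40* C* s \<le> 400* P + C* C" using amgm40[OF assms(1,2)] .
  have P0: "P > 0" using assms(1,2) by (metis zero_less_power)
  have p: "400* P + C* C > 0" using P0 by (simp add: add_pos_nonneg)
  have "40* C* P = (40* C* s)* s" using assms(2) by (simp add: power2_eq_square)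
  also have "\<dots> \<le> (400* P + C* C)* s" using h assms(1) by (simp add: mult_right_mono)
  finally show ?thesis using p by (simp add: divide_le_eq mult.commute)
qed

lemma ratid:
  fixes k3 k4 A3 B3 A4 B4 P3 P4 s3 s4 M :: real
  assumes "A3 > 0" "B3 > 0" "A4 > 0" "B4 > 0" "s3 > 0" "s4 > 0" "s3^2 = P3" "s4^2 = P4"
    "k3 < 0" "k4 \<ge> 0" "k4* k4*(A3* A3)*(B3* B3)* P3 - k3* k3*(A4* A4)*(B4* B4)* P4 = M"
  shows "k3/(A3* B3* s3) + k4/(A4* B4* s4) = M/(A3* A4* B3* B4*(k4* A3* B3* P3* s4 - k3* A4* B4* P4* s3))"
proof -
  have W: "k4* A3* B3* s3 - k3* A4* B4* s4 > 0"
  proof -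
    have "k4* A3* B3* s3 \<ge> 0" using assms by (intro mult_nonneg_nonneg) auto
    moreover have "k3* A4* B4* s4 < 0" using assms by (intro mult_neg_pos mult_pos_pos) auto
    ultimately show ?thesis by linarith
  qed
  have Den: "k4* A3* B3* P3* s4 - k3* A4* B4* P4* s3 = s3* s4*(k4* A3* B3* s3 - k3* A4* B4* s4)"
    using assms(7,8) by (simp add: power2_eq_square algebra_simps)
  have Mq: "M = (k3* A4* B4* s4 + k4* A3* B3* s3) * (k4* A3* B3* s3 - k3* A4* B4* s4)"
    using assms(7,8,11) by (simp add: power2_eq_square algebra_simps)
  show ?thesis unfolding Den Mq using assms W
    by (simp add: field_simps)
qed

lemma core_alg:
  fixes q1 q2 k3 k4 hh kk a1 a2 b1 b2 P1 P2 P3 P4 N3 C1 C2 C3 C4 s1 s2 s3 s4 :: real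
  assumes pos: "a1 > 0" "a2 > 0" "b1 > 0" "b2 > 0" "C1 > 0" "C2 > 0" "C3 > 0" "C4 > 0"
    "hh > 0" "kk \<ge> 0" "q2 < 0" "k3 < 0"
    and s: "s1 > 0" "s2 > 0" "s3 > 0" "s4 > 0"
       "s1^2 = P1" "s2^2 = P2" "s3^2 = P3" "s4^2 = P4"
    and ID: "(((((k4 * k4) * (a1 * a1)) * (b2 * b2)) * P3) + ((-1) * ((((k3 * k3) * (a2 * a2)) * (b1 * b1)) * P4))) = kk * N3"
    and SQ: "0 < (((((q2 * q2) * (a1 * a1)) * (b1 * b1)) * P1) + ((-1) * ((((q1 * q1) * (a2 * a2)) * (b2 * b2)) * P2)))"
    and k4: "0 \<le> N3 \<Longrightarrow> 0 < k4"
    and FA: "0 \<le> N3 \<Longrightarrow> 0 \<le> q1 \<Longrightarrow> 0 < ((-1) * (((((((((q1 * ((400 * P1) + (C1 * C1))) * a2) * b2) * ((400 * P2) + (C2 * C2))) * P3) * P4) * (((((k4 * a1) * b2) * C4) * ((400 * P3) + (C3 * C3))) + ((-1) * ((((k3 * a2) * b1) * C3) * ((400 * P4) + (C4 * C4)))))) + (1600 * ((((((((q2 * C1) * C2) * a1) * b1) * P1) * P3) * P4) * (((((k4 * a1) * b2) * C4) * ((400 * P3) + (C3 * C3))) + ((-1) * ((((k3 * a2) * b1) * C3) * ((400 * P4) + (C4 * C4)))))))) + ((((((hh * N3) * ((400 * P3) + (C3 * C3))) * ((400 * P4) + (C4 * C4))) * C1) * P1) * ((400 * P2) + (C2 * 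C2)))))"
    and FB: "0 \<le> N3 \<Longrightarrow> q1 < 0 \<Longrightarrow> 0 < ((-1) * ((1600 * ((((((q2 * C2) * a1) * b1) * P3) * P4) * (((((k4 * a1) * b2) * C4) * ((400 * P3) + (C3 * C3))) + ((-1) * ((((k3 * a2) * b1) * C3) * ((400 * P4) + (C4 * C4))))))) + ((((hh * N3) * ((400 * P3) + (C3 * C3))) * ((400 * P4) + (C4 * C4))) * ((400 * P2) + (C2 * C2)))))"
  shows "kk* q1/(a1* b1* s1) + kk* q2/(a2* b2* s2) + hh* k3/(a1* b2* s3) + hh* k4/(a2* b1* s4) \<le> 0"
proof -
  have P: "P1 > 0" "P2 > 0" "P3 > 0" "P4 > 0" using s by (metis zero_less_power)+
  define Z1 Z2 Y3 Y4 where "Z1 = q1/(a1* b1* s1)" and "Z2 = q2/(a2* b2* s2)"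
    and "Y3 = k3/(a1* b2* s3)" and "Y4 = k4/(a2* b1* s4)"
  have sum: "kk* q1/(a1* b1* s1) + kk* q2/(a2* b2* s2) + hh* k3/(a1* b2* s3) + hh* k4/(a2* b1* s4)
      = kk*(Z1 + Z2) + hh*(Y3 + Y4)"
    unfolding Z1_def Z2_def Y3_def Y4_def by (simp add: algebra_simps)
  have Z2neg: "Z2 < 0" unfolding Z2_def using pos s by (simp add: divide_neg_pos)
  have Y3neg: "Y3 < 0" unfolding Y3_def using pos s by (simp add: divide_neg_pos)
  show ?thesis
  proof (cases "N3 < 0")
    case True
    have "Y4^2 \<le> Y3^2"
    proof -
      have "k4* k4*(a1* a1)*(b2* b2)* P3 \<le> k3* k3*(a2* a2)*(b1* b1)* P4"
      proof -
        have "kk * N3 \<le> 0" using True pos(10) by (intro mult_nonneg_nonpos) auto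
        thus ?thesis using ID by linarith
      qed
      hence "k4* k4/((a2* a2)*(b1* b1)* P4) \<le> k3* k3/((a1* a1)*(b2* b2)* P3)"
        using pos P by (intro frac_cross) (simp_all add: mult_ac)
      moreover have "Y4^2 = k4* k4/((a2* a2)*(b1* b1)* P4)"
      proof -
        have "Y4^2 = k4^2/((a2* b1)^2 * s4^2)" unfolding Y4_def by (simp add: power_divide power_mult_distrib)
        thus ?thesis unfolding s(8) by (simp add: power2_eq_square)
      qed
      moreover have "Y3^2 = k3* k3/((a1* a1)*(b2* b2)* P3)"
      proof -
        have "Y3^2 = k3^2/((a1* b2)^2 * s3^2)" unfolding Y3_def by (simp add: power_divide power_mult_distrib)
        thus ?thesis unfolding s(7) by (simp add: power2_eq_square)
      qed
      ultimately show ?thesis by simp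
    qed
    hence Y: "Y3 + Y4 \<le> 0" using sq_sum_nonpos Y3neg by blast
    have "Z1^2 \<le> Z2^2"
    proof -
      have "q1* q1*(a2* a2)*(b2* b2)* P2 \<le> q2* q2*(a1* a1)*(b1* b1)* P1"
        using SQ by simp
      hence "q1* q1/((a1* a1)*(b1* b1)* P1) \<le> q2* q2/((a2* a2)*(b2* b2)* P2)"
        using pos P by (intro frac_cross) (simp_all add: mult_ac)
      moreover have "Z1^2 = q1* q1/((a1* a1)*(b1* b1)* P1)"
      proof -
        have "Z1^2 = q1^2/((a1* b1)^2 * s1^2)" unfolding Z1_def by (simp add: power_divide power_mult_distrib)
        thus ?thesis unfolding s(5) by (simp add: power2_eq_square)
      qed
      moreover have "Z2^2 = q2* q2/((a2* a2)*(b2* b2)* P2)"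
      proof -
        have "Z2^2 = q2^2/((a2* b2)^2 * s2^2)" unfolding Z2_def by (simp add: power_divide power_mult_distrib)
        thus ?thesis unfolding s(6) by (simp add: power2_eq_square)
      qed
      ultimately show ?thesis by simp
    qed
    hence Z: "Z1 + Z2 \<le> 0" using sq_sum_nonpos[of Z2 Z1] Z2neg by simp
    have "kk*(Z1+Z2) \<le> 0" using Z pos(10) by (simp add: mult_nonneg_nonpos)
    moreover have "hh*(Y3+Y4) \<le> 0" using Y pos(9) by (simp add: mult_nonneg_nonpos)
    ultimately show ?thesis unfolding sum by simp
  next
    case False
    hence N: "0 \<le> N3" by simp
    have k4p: "0 < k4" using k4 N .
    define PC1 PC2 PC3 PC4 where "PC1 = 400 * P1 + C1 * C1" and "PC2 = 400 * P2 + C2 * C2"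
      and "PC3 = 400 * P3 + C3 * C3" and "PC4 = 400 * P4 + C4 * C4"
    have PC: "PC3 > 0" "PC4 > 0" "PC2 > 0" "PC1 > 0"
      using P unfolding PC1_def PC2_def PC3_def PC4_def by (simp_all add: add_pos_nonneg)
    define D3 where "D3 = ((((k4 * a1) * b2) * C4) * PC3) + ((-1) * ((((k3 * a2) * b1) * C3) * PC4))"
    have D3p: "D3 > 0"
    proof -
      have "0 < (((k4 * a1) * b2) * C4) * PC3"
        using pos k4p PC by (intro mult_pos_pos) auto
      moreover have "(((k3 * a2) * b1) * C3) * PC4 < 0"
        using pos k4p PC by (intro mult_neg_pos mult_pos_pos) auto
      ultimately show ?thesis unfolding D3_def by linarith
    qed
    define L3 L4 where "L3 = 40 * C3 * P3 / PC3" and "L4 = 40 * C4 * P4 / PC4"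
    have L3: "L3 \<le> s3" unfolding L3_def PC3_def using lower40 s pos by simp
    have L4: "L4 \<le> s4" unfolding L4_def PC4_def using lower40 s pos by simp
    define DenL where "DenL = k4 * a1 * b2 * P3 * L4 - k3 * a2 * b1 * P4 * L3"
    have DenL_eq: "DenL = 40 * P3 * P4 * D3 / (PC3 * PC4)"
    proof -
      have "DenL = (40 * k4 * a1 * b2 * P3 * C4 * P4) / PC4 - (40 * k3 * a2 * b1 * P4 * C3 * P3) / PC3"
        unfolding DenL_def L3_def L4_def by (simp add: mult_ac)
      also have "\<dots> = (40 * k4 * a1 * b2 * P3 * C4 * P4 * PC3) / (PC3 * PC4) - (40 * k3 * a2 * b1 * P4 * C3 * P3 * PC4) / (PC3 * PC4)"
      proof -
        have n: "PC3 \<noteq> 0" "PC4 \<noteq> 0" using PC by simp_all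
        show ?thesis using n by (simp add: mult_ac)
      qed
      also have "\<dots> = (40 * k4 * a1 * b2 * P3 * C4 * P4 * PC3 - 40 * k3 * a2 * b1 * P4 * C3 * P3 * PC4) / (PC3 * PC4)"
        by (rule diff_divide_distrib[symmetric])
      also have "40 * k4 * a1 * b2 * P3 * C4 * P4 * PC3 - 40 * k3 * a2 * b1 * P4 * C3 * P3 * PC4 = 40 * P3 * P4 * D3"
        unfolding D3_def by (simp add: algebra_simps)
      finally show ?thesis .
    qed
    have DenLp: "DenL > 0" unfolding DenL_eq using D3p P PC by simp
    have DenLe: "DenL \<le> k4 * a1 * b2 * P3 * s4 - k3 * a2 * b1 * P4 * s3"
    proof -
      have "k4 * a1 * b2 * P3 * L4 \<le> k4 * a1 * b2 * P3 * s4" using L4 k4p pos P by (simp add: mult_left_mono)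
      moreover have "- k3 * a2 * b1 * P4 * L3 \<le> - k3 * a2 * b1 * P4 * s3" using L3 pos P by (simp add: mult_left_mono)
      ultimately show ?thesis unfolding DenL_def by simp
    qed
    have Yeq: "Y3 + Y4 = kk * N3 / (a1 * a2 * b2 * b1 * (k4 * a1 * b2 * P3 * s4 - k3 * a2 * b1 * P4 * s3))"
      unfolding Y3_def Y4_def
      by (rule ratid) (use pos s k4p ID in \<open>simp_all add: power2_eq_square mult_ac\<close>)
    have Yle: "Y3 + Y4 \<le> kk * (N3 / (a1 * a2 * b2 * b1 * DenL))"
    proof -
      have "kk * N3 / (a1 * a2 * b2 * b1 * (k4 * a1 * b2 * P3 * s4 - k3 * a2 * b1 * P4 * s3)) \<le> kk * N3 / (a1 * a2 * b2 * b1 * DenL)"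
        using DenLe DenLp pos N by (intro divide_left_mono mult_pos_pos mult_nonneg_nonneg mult_left_mono) auto
      thus ?thesis unfolding Yeq by simp
    qed
    have Z2le: "Z2 \<le> q2 * (40 * C2) / (a2 * b2 * PC2)"
      unfolding Z2_def PC2_def using bound_neg[of q2 s2 P2 C2 "a2 * b2"] pos s by (simp add: mult.assoc)
    have T3: "hh * (N3 / (a1 * a2 * b2 * b1 * DenL)) = hh * N3 * PC3 * PC4 / (a1 * a2 * b1 * b2 * 40 * P3 * P4 * D3)"
      unfolding DenL_eq using PC P D3p pos by (simp add: mult_ac)
    have YY: "kk * (Z1 + Z2) + hh * (Y3 + Y4) \<le> kk * (Z1 + Z2 + hh * (N3 / (a1 * a2 * b2 * b1 * DenL)))"
    proof -
      have "hh * (Y3 + Y4) \<le> hh * (kk * (N3 / (a1 * a2 * b2 * b1 * DenL)))"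
        by (rule mult_left_mono[OF Yle]) (use pos(9) in simp)
      thus ?thesis by (simp add: algebra_simps)
    qed
    define Q where "Q = a1 * a2 * b1 * b2 * P3 * P4 * D3 * 40"
    have Qp: "Q > 0" unfolding Q_def using pos P D3p by simp
    have t3: "hh * N3 * PC3 * PC4 / (a1 * a2 * b1 * b2 * 40 * P3 * P4 * D3) = (hh * N3 * PC3 * PC4) / Q"
      unfolding Q_def by (simp add: mult_ac)
    show ?thesis
    proof (cases "0 \<le> q1")
      case True
      have Z1le: "Z1 \<le> q1 * PC1 / (a1 * b1 * (40 * C1 * P1))"
        unfolding Z1_def PC1_def using bound_pos[of q1 s1 P1 C1 "a1 * b1"] True pos s by (simp add: mult.assoc)
      have FAa: "0 < ((-1) * (((((((((q1 * PC1) * a2) * b2) * PC2) * P3) * P4) * D3) + (1600 * ((((((((q2 * C1) * C2) * a1) * b1) * P1) * P3) * P4) * D3))) + ((((((hh * N3) * PC3) * PC4) * C1) * P1) * PC2)))"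
        using FA[OF N True] unfolding D3_def PC1_def PC2_def PC3_def PC4_def by simp
      have e1: "q1 * PC1 / (a1 * b1 * (40 * C1 * P1)) = (q1 * PC1 * (a2 * b2 * PC2 * P3 * P4 * D3)) / (C1 * P1 * PC2 * Q)"
        unfolding Q_def using pos P PC D3p by (simp add: mult_ac)
      have e2: "q2 * (40 * C2) / (a2 * b2 * PC2) = (40 * C2 * q2 * (a1 * b1 * P3 * P4 * D3 * 40 * C1 * P1)) / (C1 * P1 * PC2 * Q)"
        unfolding Q_def using pos P PC D3p by (simp add: mult_ac)
      have e3: "(hh * N3 * PC3 * PC4) / Q = (hh * N3 * PC3 * PC4 * (C1 * P1 * PC2)) / (C1 * P1 * PC2 * Q)"
        using pos P PC Qp by simp
      have "q1 * PC1 / (a1 * b1 * (40 * C1 * P1)) + q2 * (40 * C2) / (a2 * b2 * PC2) + (hh * N3 * PC3 * PC4) / Q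
           = - (((-1) * (((((((((q1 * PC1) * a2) * b2) * PC2) * P3) * P4) * D3) + (1600 * ((((((((q2 * C1) * C2) * a1) * b1) * P1) * P3) * P4) * D3))) + ((((((hh * N3) * PC3) * PC4) * C1) * P1) * PC2)))) / (C1 * P1 * PC2 * Q)"
        unfolding e1 e2 e3 add_divide_distrib[symmetric] by (simp add: algebra_simps)
      also have "\<dots> \<le> 0" using FAa pos P PC Qp by (simp add: divide_nonpos_pos)
      finally have B: "Z1 + Z2 + hh * (N3 / (a1 * a2 * b2 * b1 * DenL)) \<le> 0" using Z1le Z2le T3 t3 by linarith
      have "kk * (Z1 + Z2 + hh * (N3 / (a1 * a2 * b2 * b1 * DenL))) \<le> 0" using B pos(10) by (simp add: mult_nonneg_nonpos)
      thus ?thesis unfolding sum using YY by linarith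
    next
      case False
      hence q1n: "q1 < 0" by simp
      have Z1le: "Z1 \<le> 0" unfolding Z1_def using q1n pos s by (simp add: divide_nonpos_pos)
      have FBa: "0 < ((-1) * ((1600 * ((((((q2 * C2) * a1) * b1) * P3) * P4) * D3)) + ((((hh * N3) * PC3) * PC4) * PC2)))"
        using FB[OF N q1n] unfolding D3_def PC1_def PC2_def PC3_def PC4_def by simp
      have e2: "q2 * (40 * C2) / (a2 * b2 * PC2) = (40 * C2 * q2 * (a1 * b1 * P3 * P4 * D3 * 40)) / (PC2 * Q)"
        unfolding Q_def using pos P PC D3p by (simp add: mult_ac)
      have e3: "(hh * N3 * PC3 * PC4) / Q = (hh * N3 * PC3 * PC4 * PC2) / (PC2 * Q)"
        using pos P PC Qp by simp
      have "q2 * (40 * C2) / (a2 * b2 * PC2) + (hh * N3 * PC3 * PC4) / Q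
           = - (((-1) * ((1600 * ((((((q2 * C2) * a1) * b1) * P3) * P4) * D3)) + ((((hh * N3) * PC3) * PC4) * PC2)))) / (PC2 * Q)"
        unfolding e2 e3 add_divide_distrib[symmetric] by (simp add: algebra_simps)
      also have "\<dots> \<le> 0" using FBa pos P PC Qp by (simp add: divide_nonpos_pos)
      finally have B: "Z1 + Z2 + hh * (N3 / (a1 * a2 * b2 * b1 * DenL)) \<le> 0" using Z1le Z2le T3 t3 by linarith
      have "kk * (Z1 + Z2 + hh * (N3 / (a1 * a2 * b2 * b1 * DenL))) \<le> 0" using B pos(10) by (simp add: mult_nonneg_nonpos)
      thus ?thesis unfolding sum using YY by linarith
    qed
  qed
qed

definition Hs :: "real \<Rightarrow> real \<Rightarrow> real" where
  "Hs Y Z = arctan (Y*Z/2 / sqrt (1 + (Y^2+Z^2)/2))"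
lemma saF_H: "sa_F 1 (Y / sqrt 2) (Z / sqrt 2) = Hs Y Z"
proof -
  have s2: "sqrt 2 * sqrt 2 = (2::real)" by simp
  have a: "(Y / sqrt 2) * (Z / sqrt 2) = Y*Z/2" using s2 by (simp add: field_simps)
  have b: "1 * sqrt (1^2 + (Y / sqrt 2)^2 + (Z / sqrt 2)^2) = sqrt (1 + (Y^2+Z^2)/2)"
    by (simp add: power_divide add_divide_distrib)
  show ?thesis unfolding sa_F_def Hs_def a b by (simp add: divide_divide_eq_left)
qed
lemma H_deriv:
  assumes "(Y has_real_derivative Y') (at t)" "(Z has_real_derivative Z') (at t)"
  shows "((\<lambda>t. Hs (Y t) (Z t)) has_real_derivative
     ((Y' * Z t * (2 + (Z t)^2) + Y t * Z' * (2 + (Y t)^2)) /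
       (sqrt (1 + ((Y t)^2 + (Z t)^2)/2) * (2 + (Y t)^2) * (2 + (Z t)^2)))) (at t)"
proof -
  define y z where "y = Y t" and "z = Z t"
  define s where "s = sqrt (1 + (y^2 + z^2)/2)"
  have q: "1 + (y^2 + z^2)/2 > 0" by (simp add: add_pos_nonneg)
  have sp: "s > 0" unfolding s_def using q by simp
  have ss: "s^2 = 1 + (y^2 + z^2)/2" unfolding s_def using q by simp
  have dq: "((\<lambda>t. 1 + ((Y t)^2 + (Z t)^2)/2) has_real_derivative (y*Y' + z*Z')) (at t)"
    unfolding y_def z_def
    by (auto intro!: derivative_eq_intros assms simp: algebra_simps)
  have ds: "((\<lambda>t. sqrt (1 + ((Y t)^2 + (Z t)^2)/2)) has_real_derivative ((y*Y' + z*Z') / (2 * s))) (at t)"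
    using DERIV_chain2[OF DERIV_real_sqrt dq] q sp unfolding s_def y_def z_def
    by (simp add: field_simps)
  have dn: "((\<lambda>t. Y t * Z t / 2) has_real_derivative ((Y' * z + y * Z')/2)) (at t)"
    unfolding y_def z_def by (auto intro!: derivative_eq_intros assms)
  have dg: "((\<lambda>t. Y t * Z t / 2 / sqrt (1 + ((Y t)^2 + (Z t)^2)/2)) has_real_derivative
      ((((Y' * z + y * Z')/2) * s - (y*z/2) * ((y*Y' + z*Z') / (2 * s))) / s^2)) (at t)"
    using DERIV_divide[OF dn ds] sp unfolding s_def y_def z_def by (simp add: power2_eq_square)
  have dH: "((\<lambda>t. Hs (Y t) (Z t)) has_real_derivative
      (inverse (1 + (y*z/2/s)^2) * ((((Y' * z + y * Z')/2) * s - (y*z/2) * ((y*Y' + z*Z') / (2 * s))) / s^2))) (at t)"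
    unfolding Hs_def using DERIV_chain2[OF DERIV_arctan dg] unfolding s_def y_def z_def by simp
  have a: "(2 + y^2) * (2 + z^2) > 0" by (simp add: add_pos_nonneg)
  have h1: "1 + (y*z/2/s)^2 = (2 + y^2) * (2 + z^2) / (4 * s^2)"
    using sp ss by (simp add: field_simps power2_eq_square)
  have st: "((Y' * z + y * Z')/2) * s - (y*z/2) * ((y*Y' + z*Z') / (2 * s))
      = ((Y' * z + y * Z') * s^2 - y*z*(y*Y' + z*Z')/2) / (2 * s)"
    using sp by (simp add: field_simps power2_eq_square)
  have W: "(Y' * z + y * Z') * (1 + (y^2 + z^2)/2) - y*z*(y*Y' + z*Z')/2
      = (Y' * z * (2 + z^2) + y * Z' * (2 + y^2))/2"
    by (simp add: algebra_simps power2_eq_square)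
  have gen: "\<And>S2 N A2 B2. S2 > 0 \<Longrightarrow> A2 > 0 \<Longrightarrow> B2 > 0 \<Longrightarrow>
     inverse (A2 * B2 / (4 * S2)) * ((N/2) / (2 * s) / S2) = N / (s * A2 * B2)"
    using sp by (simp add: field_simps)
  have A2: "2 + y^2 > 0" "2 + z^2 > 0" by (simp_all add: add_pos_nonneg)
  have "inverse (1 + (y*z/2/s)^2) * ((((Y' * z + y * Z')/2) * s - (y*z/2) * ((y*Y' + z*Z') / (2 * s))) / s^2)
      = (Y' * z * (2 + z^2) + y * Z' * (2 + y^2)) / (s * (2 + y^2) * (2 + z^2))"
    unfolding h1 st ss W using gen[OF q A2] .
  with dH show ?thesis unfolding y_def z_def s_def by simp
qed
definition Af :: "real \<Rightarrow> real \<Rightarrow> real" where "Af e T = T^2 + 2*e*T + 3"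
definition Bf :: "real \<Rightarrow> real \<Rightarrow> real" where "Bf d T = 12*T^2 + 4*d*T + 1"
definition Pf :: "real \<Rightarrow> real \<Rightarrow> real \<Rightarrow> real" where "Pf e d T = 4*T^4 + 8*e*T^3 + 16*T^2 + 4*d*T + 1"
definition Kf :: "real \<Rightarrow> real \<Rightarrow> real \<Rightarrow> real" where "Kf e d T = d*(2*T+d)*Bf d T - 4*e*T*(1+e*T)*Af e T"

lemma Pf_eq: "Pf e d T = 4*T^2*Af e T + (2*T+d)^2" if "e^2 = 1" "d^2 = 1"
  using that unfolding Pf_def Af_def by (simp add: power2_eq_square power3_eq_cube power4_eq_xxxx algebra_simps, algebra?)

lemma term_deriv:
  assumes T: "T > 0" and e: "e^2 = 1" and d: "d^2 = 1"
  shows "((\<lambda>T. e*d*Hs (1+e*T) (1+d/(2*T))) has_real_derivative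
           (sqrt 2 * Kf e d T / (Af e T * Bf d T * sqrt (Pf e d T)))) (at T)"
proof -
  have dZ: "((\<lambda>T. 1 + d/(2*T)) has_real_derivative (-d/(2*T^2))) (at T)"
    using T by (auto intro!: derivative_eq_intros simp: power2_eq_square field_simps)
  have dY: "((\<lambda>T. 1 + e*T) has_real_derivative e) (at T)"
    by (auto intro!: derivative_eq_intros)
  note hd = DERIV_cmult[OF H_deriv[OF dY dZ], of "e*d"]
  define p where "p = sqrt (Pf e d T)"
  define r where "r = sqrt (2::real)"
  have r: "r > 0" "r^2 = 2" unfolding r_def by simp_all
  have AY: "2 + (1+e*T)^2 = Af e T" using e unfolding Af_def by (simp add: power2_eq_square algebra_simps, algebra?)
  have BZ: "2 + (1+d/(2*T))^2 = Bf d T / (4*T^2)" using d T unfolding Bf_def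
    by (simp add: power2_eq_square field_simps, algebra?)
  have Apos: "Af e T > 0" unfolding AY[symmetric] by (intro add_pos_nonneg) auto
  have Ppos: "Pf e d T > 0"
    unfolding Pf_eq[OF e d] using Apos T by (intro add_pos_nonneg mult_pos_pos) auto
  have p: "p > 0" "p^2 = Pf e d T" unfolding p_def using Ppos by simp_all
  have arg: "1 + ((1+e*T)^2 + (1+d/(2*T))^2)/2 = Pf e d T / (8*T^2)"
    using T e d unfolding Pf_def by (simp add: field_simps power2_eq_square power3_eq_cube power4_eq_xxxx, algebra?)
  have sq: "sqrt (1 + ((1+e*T)^2 + (1+d/(2*T))^2)/2) = p / (2*r*T)"
  proof -
    have "sqrt (Pf e d T / (8*T^2)) = sqrt (Pf e d T) / sqrt (8*T^2)" by (simp add: real_sqrt_divide)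
    moreover have "sqrt (8*T^2) = 2*r*T"
    proof -
      have "sqrt (8*T^2) = sqrt ((2*r*T)^2)" using r by (simp add: power_mult_distrib)
      thus ?thesis using r T by simp
    qed
    ultimately show ?thesis unfolding arg p_def by simp
  qed
  have Bpos: "Bf d T > 0"
  proof -
    have "Bf d T = (2 + (1+d/(2*T))^2) * (4*T^2)" using BZ T by (simp add: field_simps)
    moreover have "(2 + (1+d/(2*T))^2) * (4*T^2) > 0" using T by (intro mult_pos_pos add_pos_nonneg) auto
    ultimately show ?thesis by simp
  qed
  define Z where "Z = 1 + d/(2*T)"
  define Y where "Y = 1 + e*T"
  have ee: "e*e = 1" using e by (simp add: power2_eq_square)
  have dd: "d*d = 1" using d by (simp add: power2_eq_square)
  have "e * d * ((e * (1 + d/(2*T)) * (2 + (1 + d/(2*T))^2) + (1 + e*T) * (-d/(2*T^2)) * (2 + (1+e*T)^2)) /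
          (sqrt (1 + ((1+e*T)^2 + (1+d/(2*T))^2)/2) * (2 + (1+e*T)^2) * (2 + (1 + d/(2*T))^2)))
      = e * d * ((e * Z * (Bf d T / (4*T^2)) + Y * (-d/(2*T^2)) * Af e T) /
          ((p / (2*r*T)) * Af e T * (Bf d T / (4*T^2))))"
    unfolding sq AY BZ Z_def Y_def ..
  also have "\<dots> = 2*r*T*((e*e)*d*Z*Bf d T - 2*e*(d*d)*Y*Af e T) / (p * Af e T * Bf d T)"
    using T r(1) p(1) Apos Bpos by (simp add: field_simps power2_eq_square)
  also have "\<dots> = r * (d * (2*T*Z) * Bf d T - 4*e*T*Y*Af e T) / (p * Af e T * Bf d T)"
    unfolding ee dd by (simp add: algebra_simps)
  also have "2*T*Z = 2*T + d" unfolding Z_def using T by (simp add: field_simps)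
  also have "r * (d * (2*T + d) * Bf d T - 4*e*T*Y*Af e T) / (p * Af e T * Bf d T) = r * Kf e d T / (Af e T * Bf d T * p)"
    unfolding Kf_def Y_def by (simp add: algebra_simps)
  finally have "e * d * ((e * (1 + d/(2*T)) * (2 + (1 + d/(2*T))^2) + (1 + e*T) * (-d/(2*T^2)) * (2 + (1+e*T)^2)) /
          (sqrt (1 + ((1+e*T)^2 + (1+d/(2*T))^2)/2) * (2 + (1+e*T)^2) * (2 + (1 + d/(2*T))^2)))
        = r * Kf e d T / (Af e T * Bf d T * p)" .
  then show ?thesis using hd unfolding p_def r_def by simp
qed


definition PhiF :: "real \<Rightarrow> real" where
  "PhiF T = Hs (1+T) (1+1/(2*T)) - Hs (1+T) (1-1/(2*T)) - Hs (1-T) (1+1/(2*T)) + Hs (1-T) (1-1/(2*T))"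

lemma Omega_Phi:
  assumes "l > 0"
  shows "Omega l = PhiF (l / sqrt 2)"
proof -
  have s2: "sqrt 2 * sqrt 2 = (2::real)" by simp
  have sp: "sqrt 2 > (0::real)" by simp
  have e1: "1 / sqrt 2 - l / 2 = (1 - l / sqrt 2) / sqrt 2"
    using s2 sp by (simp add: field_simps)
  have e2: "1 / sqrt 2 + l / 2 = (1 + l / sqrt 2) / sqrt 2"
    using s2 sp by (simp add: field_simps)
  have e3: "1 / sqrt 2 - 1 / (2 * l) = (1 - 1 / (2 * (l / sqrt 2))) / sqrt 2"
    using s2 sp assms by (simp add: field_simps)
  have e4: "1 / sqrt 2 + 1 / (2 * l) = (1 + 1 / (2 * (l / sqrt 2))) / sqrt 2"
    using s2 sp assms by (simp add: field_simps)
  show ?thesis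
    unfolding Omega_def Let_def solid_angle_rect_def e1 e2 e3 e4 saF_H PhiF_def
    by simp
qed

lemma rel:
  "Kf 1 1 T = fkk T * fq1 T" "Kf (-1) (-1) T = fkk T * fq2 T"
  "Kf 1 (-1) T = fhh T * fk3 T" "Kf (-1) 1 T = fhh T * fk4 T"
  "Af 1 T = fa1 T" "Af (-1) T = fa2 T" "Bf 1 T = fb1 T" "Bf (-1) T = fb2 T"
  "Pf 1 1 T = fP1 T" "Pf (-1) (-1) T = fP2 T" "Pf 1 (-1) T = fP3 T" "Pf (-1) 1 T = fP4 T"
  by (simp_all add: Kf_def Af_def Bf_def Pf_def fdefs Lkk_def Lq1_def Lq2_def Lhh_def Lk3_def Lk4_def
      La1_def La2_def Lb1_def Lb2_def LP1_def LP2_def LP3_def LP4_def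
      algebra_simps power2_eq_square power3_eq_cube power4_eq_xxxx)

lemma sqrt2_bound: "7/10 < 1 / sqrt (2::real)"
proof -
  have "(sqrt 2)^2 < (10/7::real)^2" by (simp add: power_divide)
  hence "sqrt 2 < (10/7::real)" by (rule power_less_imp_less_base) simp
  thus ?thesis by (simp add: field_simps)
qed

lemma deriv_sum_nonpos:
  assumes T: "1/sqrt 2 \<le> T"
  shows "sqrt 2 * Kf 1 1 T / (Af 1 T * Bf 1 T * sqrt (Pf 1 1 T))
       + sqrt 2 * Kf 1 (-1) T / (Af 1 T * Bf (-1) T * sqrt (Pf 1 (-1) T))
       + sqrt 2 * Kf (-1) 1 T / (Af (-1) T * Bf 1 T * sqrt (Pf (-1) 1 T))
       + sqrt 2 * Kf (-1) (-1) T / (Af (-1) T * Bf (-1) T * sqrt (Pf (-1) (-1) T)) \<le> 0"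
proof -
  have T7: "7/10 \<le> T" using T sqrt2_bound by linarith
  have Tp: "T > 0" using T7 by linarith
  have kk: "fkk T \<ge> 0"
  proof -
    have "(1/sqrt 2)^2 \<le> T^2" using T by (rule power_mono) simp
    hence "1/2 \<le> T^2" by (simp add: power_divide)
    thus ?thesis by (simp add: fkk_def Lkk_def power2_eq_square algebra_simps)
  qed
  have q2: "fq2 T < 0" using q2_sgn[OF T7] by simp
  have k3: "fk3 T < 0" using k3_sgn[OF T7] by simp
  have hh: "fhh T > 0" using hh_sgn[OF T7] by simp
  have a1: "fa1 T > 0" using a1_sgn[OF T7] by simp
  have b1: "fb1 T > 0" using b1_sgn[OF T7] by simp
  have b2: "fb2 T > 0" using b2_sgn[OF T7] by simp
  have C1: "fC1 T > 0" using C1_sgn[OF T7] by simp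
  have C2: "fC2 T > 0" using C2_sgn[OF T7] by simp
  have C3: "fC3 T > 0" using C3_sgn[OF T7] by simp
  have C4: "fC4 T > 0" using C4_sgn[OF T7] by simp
  have P1: "fP1 T > 0" using P1_sgn[OF T7] by simp
  have P2: "fP2 T > 0" using P2_sgn[OF T7] by simp
  have P3: "fP3 T > 0" using P3_sgn[OF T7] by simp
  have P4: "fP4 T > 0" using P4_sgn[OF T7] by simp
  have a2: "fa2 T > 0"
  proof -
    have "0 \<le> (T - 1)^2" by simp
    hence "0 \<le> T*T - 2*T + 1" by (simp add: power2_eq_square algebra_simps)
    thus ?thesis by (simp add: fa2_def La2_def algebra_simps)
  qed
  have k4: "0 < fk4 T" if N: "0 \<le> fN3 T"
  proof -
    have "T < 46/10"
    proof (rule ccontr)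
      assume "\<not> T < 46/10"
      hence "46/10 \<le> T" by simp
      from NN3_pos[OF this] N show False by simp
    qed
    hence "0 \<le> T * (18 - 2*T)" using Tp by (intro mult_nonneg_nonneg) auto
    thus ?thesis by (simp add: fk4_def Lk4_def algebra_simps)
  qed
  have q1: "28/10 \<le> T" if "fq1 T < 0"
  proof (rule ccontr)
    assume "\<not> 28/10 \<le> T"
    hence "0 \<le> (T - 7/10) * (28/10 - T)" using T7 by (intro mult_nonneg_nonneg) auto
    hence "0 < fq1 T" using T7 \<open>\<not> 28/10 \<le> T\<close>
      by (simp add: fq1_def Lq1_def algebra_simps)
    thus False using that by simp
  qed
  have sq: "sqrt (fP1 T) > 0" "sqrt (fP2 T) > 0" "sqrt (fP3 T) > 0" "sqrt (fP4 T) > 0"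
    "(sqrt (fP1 T))^2 = fP1 T" "(sqrt (fP2 T))^2 = fP2 T" "(sqrt (fP3 T))^2 = fP3 T" "(sqrt (fP4 T))^2 = fP4 T"
    using P1 P2 P3 P4 by simp_all
  have main: "fkk T * fq1 T / (fa1 T * fb1 T * sqrt (fP1 T)) + fkk T * fq2 T / (fa2 T * fb2 T * sqrt (fP2 T))
      + fhh T * fk3 T / (fa1 T * fb2 T * sqrt (fP3 T)) + fhh T * fk4 T / (fa2 T * fb1 T * sqrt (fP4 T)) \<le> 0"
    by (rule core_alg[OF a1 a2 b1 b2 C1 C2 C3 C4 hh kk q2 k3 sq ID_eq SQ_pos[OF T7] k4 FA_pos[OF T7] FB_pos[OF q1]])
  have "sqrt 2 * Kf 1 1 T / (Af 1 T * Bf 1 T * sqrt (Pf 1 1 T))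
       + sqrt 2 * Kf 1 (-1) T / (Af 1 T * Bf (-1) T * sqrt (Pf 1 (-1) T))
       + sqrt 2 * Kf (-1) 1 T / (Af (-1) T * Bf 1 T * sqrt (Pf (-1) 1 T))
       + sqrt 2 * Kf (-1) (-1) T / (Af (-1) T * Bf (-1) T * sqrt (Pf (-1) (-1) T))
     = sqrt 2 * (fkk T * fq1 T / (fa1 T * fb1 T * sqrt (fP1 T)) + fkk T * fq2 T / (fa2 T * fb2 T * sqrt (fP2 T))
      + fhh T * fk3 T / (fa1 T * fb2 T * sqrt (fP3 T)) + fhh T * fk4 T / (fa2 T * fb1 T * sqrt (fP4 T)))"
    unfolding rel by (simp add: algebra_simps)
  also have "\<dots> \<le> 0" using main by (simp add: mult_nonneg_nonpos)
  finally show ?thesis .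
qed

definition dPhi :: "real \<Rightarrow> real" where
  "dPhi T = sqrt 2 * Kf 1 1 T / (Af 1 T * Bf 1 T * sqrt (Pf 1 1 T))
       + sqrt 2 * Kf 1 (-1) T / (Af 1 T * Bf (-1) T * sqrt (Pf 1 (-1) T))
       + sqrt 2 * Kf (-1) 1 T / (Af (-1) T * Bf 1 T * sqrt (Pf (-1) 1 T))
       + sqrt 2 * Kf (-1) (-1) T / (Af (-1) T * Bf (-1) T * sqrt (Pf (-1) (-1) T))"

lemma Phi_deriv:
  assumes T: "T > 0"
  shows "(PhiF has_real_derivative dPhi T) (at T)"
proof -
  have d11: "((\<lambda>T. 1*1*Hs (1+1*T) (1+1/(2*T))) has_real_derivative
      (sqrt 2 * Kf 1 1 T / (Af 1 T * Bf 1 T * sqrt (Pf 1 1 T)))) (at T)"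
    by (rule term_deriv) (use T in simp_all)
  have d12: "((\<lambda>T. 1*(-1)*Hs (1+1*T) (1+(-1)/(2*T))) has_real_derivative
      (sqrt 2 * Kf 1 (-1) T / (Af 1 T * Bf (-1) T * sqrt (Pf 1 (-1) T)))) (at T)"
    by (rule term_deriv) (use T in simp_all)
  have d21: "((\<lambda>T. (-1)*1*Hs (1+(-1)*T) (1+1/(2*T))) has_real_derivative
      (sqrt 2 * Kf (-1) 1 T / (Af (-1) T * Bf 1 T * sqrt (Pf (-1) 1 T)))) (at T)"
    by (rule term_deriv) (use T in simp_all)
  have d22: "((\<lambda>T. (-1)*(-1)*Hs (1+(-1)*T) (1+(-1)/(2*T))) has_real_derivative
      (sqrt 2 * Kf (-1) (-1) T / (Af (-1) T * Bf (-1) T * sqrt (Pf (-1) (-1) T)))) (at T)"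
    by (rule term_deriv) (use T in simp_all)
  have "((\<lambda>T. 1*1*Hs (1+1*T) (1+1/(2*T)) + 1*(-1)*Hs (1+1*T) (1+(-1)/(2*T))
          + (-1)*1*Hs (1+(-1)*T) (1+1/(2*T)) + (-1)*(-1)*Hs (1+(-1)*T) (1+(-1)/(2*T))) has_real_derivative
         dPhi T) (at T)"
    unfolding dPhi_def by (intro DERIV_add d11 d12 d21 d22)
  moreover have "(\<lambda>T. 1*1*Hs (1+1*T) (1+1/(2*T)) + 1*(-1)*Hs (1+1*T) (1+(-1)/(2*T))
          + (-1)*1*Hs (1+(-1)*T) (1+1/(2*T)) + (-1)*(-1)*Hs (1+(-1)*T) (1+(-1)/(2*T))) = PhiF"
    by (rule ext) (simp add: PhiF_def)
  ultimately show ?thesis by simp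
qed

lemma Phi_mono:
  assumes T: "1/sqrt 2 \<le> T"
  shows "PhiF T \<le> PhiF (1/sqrt 2)"
proof -
  have pos: "0 < x" if "x \<in> {1/sqrt 2..T}" for x
  proof -
    have "0 < 1/sqrt (2::real)" by simp
    moreover have "1/sqrt 2 \<le> x" using that by simp
    ultimately show ?thesis by linarith
  qed
  have "(\<lambda>x. - PhiF x) (1/sqrt 2) \<le> (\<lambda>x. - PhiF x) T"
  proof (rule deriv_nonneg_imp_mono[of "1/sqrt 2" T "\<lambda>x. - PhiF x" "\<lambda>x. - dPhi x"])
    show "((\<lambda>x. - PhiF x) has_real_derivative - dPhi x) (at x)" if "x \<in> {1/sqrt 2..T}" for x
      using DERIV_minus[OF Phi_deriv[OF pos[OF that]]] .
    show "0 \<le> - dPhi x" if "x \<in> {1/sqrt 2..T}" for x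
      using deriv_sum_nonpos[of x] that unfolding dPhi_def by simp
  qed (use T in simp)
  thus ?thesis by simp
qed

theorem mainTheorem3:
  shows "\<forall>l::real. l \<ge> 1 \<longrightarrow> Omega l \<le> Omega 1"
proof (intro allI impI)
  fix l :: real
  assume l: "l \<ge> 1"
  have eq1: "Omega l = PhiF (l / sqrt 2)" by (rule Omega_Phi) (use l in simp)
  have eq2: "Omega 1 = PhiF (1 / sqrt 2)" using Omega_Phi[of 1] by simp
  have "1 / sqrt 2 \<le> l / sqrt 2" using l by (simp add: divide_right_mono)
  hence "PhiF (l / sqrt 2) \<le> PhiF (1 / sqrt 2)" by (rule Phi_mono)
  thus "Omega l \<le> Omega 1" unfolding eq1 eq2 .
qed

end
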